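(* Let $(X_t)_{t\ge1}$ be independent random variables with values in $[0,1]$, defined on a probability space $(\Omega,\mathcal{F},\mathbb{P})$, with common expectation $\mu=\mathbb{E}[X_t]$. Let $(\mathcal{F}_t)_{t\ge0}$ be an increasing sequence of sub-$\sigma$-fields of $\mathcal{F}$ such that for each $t$, $\sigma(X_1,\dots,X_t)\subset\mathcal{F}_t$ and for $s>t$, $X_s$ is independent of $\mathcal{F}_t$. Let $(\epsilon_t)_{t\ge1}$ be $\{0,1\}$-valued random variables with $\epsilon_t$ $\mathcal{F}_{t-1}$-measurable for every $t\ge1$. Let $\delta>0$, let $n\ge2$ be an integer, and set \[S(n)=\sum_{s=1}^n\epsilon_sX_s,\quad N(n)=\sum_{s=1}^n\epsilon_s,\quad \hat\mu(n)=\frac{S(n)}{N(n)},\] \[u(n)=\max\{q\in[\hat\mu(n),1]:\ N(n)\,d(\hat\mu(n),q)\le\delta\},\] with the convention $u(n)=1$ when $N(n)=0$. Then \[\mathbb{P}(u(n)<\mu)\le e\lceil\delta\log(n)\rceil\exp(-\delta).\]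
   Context: $d(p,q)=p\log\frac pq+(1-p)\log\frac{1-p}{1-q}$ for $p,q\in[0,1]$ (Bernoulli Kullback–Leibler divergence), with conventions $0\log0=0\log(0/0)=0$ and $x\log(x/0)=+\infty$ for $x>0$. *)

theory Defs
  imports "HOL-Probability.Probability"
begin

text \<open>Bernoulli Kullback-Leibler divergence, extended-real valued, with the conventions
  0 log 0 = 0 log (0/0) = 0 and x log (x/0) = +infinity for x > 0.\<close>
definition xlogxy :: "real \<Rightarrow> real \<Rightarrow> ereal" where
  "xlogxy x y = (if x = 0 then 0 else if y = 0 then \<infinity> else ereal (x * ln (x / y)))"

definition kl_bern :: "real \<Rightarrow> real \<Rightarrow> ereal" where
  "kl_bern p q = xlogxy p q + xlogxy (1 - p) (1 - q)"

text \<open>Upper confidence index u(n) from the count N = N(n) and the sum S = S(n):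
  u = max {q in [muhat,1]. N * d(muhat,q) <= delta}, muhat = S/N, and u = 1 if N = 0.\<close>
definition kl_ucb :: "real \<Rightarrow> real \<Rightarrow> real \<Rightarrow> real" where
  "kl_ucb \<delta> N S =
     (if N = 0 then 1
      else (GREATEST q. q \<in> {S / N..1} \<and> ereal N * kl_bern (S / N) q \<le> ereal \<delta>))"

end

theory Submission
  imports Defs "HOL-Real_Asymp.Real_Asymp"
begin


definition Dkl :: "real \<Rightarrow> real \<Rightarrow> real" where
  "Dkl p q = p * ln (p / q) + (1 - p) * ln ((1 - p) / (1 - q))"

lemma kl_eq_D:
  assumes "0 \<le> p" "p \<le> q" "q < 1"
  shows "kl_bern p q = ereal (Dkl p q)"
proof (cases "p = 0")
  case True then show ?thesis using assms by (simp add: kl_bern_def xlogxy_def Dkl_def)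
next
  case False
  then have "p > 0" using assms by auto
  then show ?thesis using assms by (simp add: kl_bern_def xlogxy_def Dkl_def)
qed

lemma kl_one: assumes "0 \<le> p" "p < 1" shows "kl_bern p 1 = \<infinity>"
  using assms by (simp add: kl_bern_def xlogxy_def)

lemma kl_self: assumes "0 \<le> p" "p \<le> 1" shows "kl_bern p p = 0"
  using assms by (auto simp: kl_bern_def xlogxy_def zero_ereal_def)

lemma D_lower:
  assumes "0 \<le> p" "p < 1" "p \<le> q" "q < 1"
  shows "Dkl p q \<ge> (1 - p) * ln ((1 - p) / (1 - q)) - 1"
proof -
  have "p * ln (p / q) \<ge> p - q"
  proof (cases "p = 0")
    case True then show ?thesis using assms by simp
  next
    case False
    then have pq: "p > 0" "q > 0" using assms by auto
    have "ln (q / p) \<le> q / p - 1" using pq by (intro ln_le_minus_one) simp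
    moreover have "ln (p / q) = - ln (q / p)" using pq by (simp add: ln_div)
    ultimately have "ln (p / q) \<ge> 1 - q / p" by simp
    then have "p * ln (p / q) \<ge> p * (1 - q / p)" using pq by (intro mult_left_mono) auto
    also have "p * (1 - q / p) = p - q" using pq by (simp add: field_simps)
    finally show ?thesis by simp
  qed
  then show ?thesis using assms unfolding Dkl_def by simp
qed

lemma ucb_exists:
  assumes N: "N > 0" and p: "0 \<le> p" "p \<le> 1" and d: "\<delta> > 0"
  shows "\<exists>u. (u \<in> {p..1} \<and> ereal N * kl_bern p u \<le> ereal \<delta>) \<and>
     (\<forall>q. q \<in> {p..1} \<and> ereal N * kl_bern p q \<le> ereal \<delta> \<longrightarrow> q \<le> u)"
proof (cases "p = 1")
  case True
  then show ?thesis using kl_self[of 1] d by (intro exI[of _ 1]) auto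
next
  case False
  then have p1: "p < 1" using p by auto
  define c where "c = \<delta> / N"
  define b where "b = 1 - (1 - p) / exp ((c + 1) / (1 - p))"
  have "(1 - p) / exp ((c + 1) / (1 - p)) > 0" using p1 by auto
  then have b1: "b < 1" unfolding b_def by simp
  have "exp ((c + 1) / (1 - p)) \<ge> 1" using p1 d N unfolding c_def by auto
  then have "(1 - p) / exp ((c + 1) / (1 - p)) \<le> 1 - p" using p1
    by (simp add: divide_le_eq mult_le_cancel_left1 mult.commute)
  then have pb: "p \<le> b" unfolding b_def by simp
  define T where "T = {q. q \<in> {p..1} \<and> ereal N * kl_bern p q \<le> ereal \<delta>}"
  have Teq: "T = {q \<in> {p..b}. Dkl p q \<le> c}"
  proof (intro set_eqI iffI)
    fix q assume q: "q \<in> T"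
    then have q1: "p \<le> q" "q \<le> 1" unfolding T_def by auto
    have "q \<noteq> 1"
    proof
      assume "q = 1"
      then have "ereal N * kl_bern p q = \<infinity>" using kl_one[OF p(1) p1] N by simp
      then show False using q unfolding T_def by auto
    qed
    then have q2: "q < 1" using q1 by auto
    have "ereal N * ereal (Dkl p q) \<le> ereal \<delta>" using q kl_eq_D[OF p(1) q1(1) q2] unfolding T_def by auto
    then have "N * Dkl p q \<le> \<delta>" by simp
    then have Dc: "Dkl p q \<le> c" unfolding c_def using N by (simp add: field_simps)
    have "(1 - p) * ln ((1 - p) / (1 - q)) \<le> c + 1" using D_lower[OF p(1) p1 q1(1) q2] Dc by simp
    then have "ln ((1 - p) / (1 - q)) \<le> (c + 1) / (1 - p)" using p1 by (simp add: field_simps)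
    then have "(1 - p) / (1 - q) \<le> exp ((c + 1) / (1 - p))"
      using p1 q2 by (metis divide_pos_pos exp_le_cancel_iff exp_ln diff_gt_0_iff_gt)
    then have "(1 - p) / exp ((c + 1) / (1 - p)) \<le> 1 - q" using p1 q2
      by (simp add: field_simps)
    then have "q \<le> b" unfolding b_def by simp
    then show "q \<in> {q \<in> {p..b}. Dkl p q \<le> c}" using q1 Dc by auto
  next
    fix q assume q: "q \<in> {q \<in> {p..b}. Dkl p q \<le> c}"
    then have q1: "p \<le> q" "q < 1" using b1 by auto
    have "N * Dkl p q \<le> \<delta>" using q N unfolding c_def by (simp add: field_simps)
    then show "q \<in> T" using q1 kl_eq_D[OF p(1) q1] unfolding T_def by auto
  qed
  have cont: "continuous_on {p..b} (\<lambda>q. Dkl p q)"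
  proof (cases "p = 0")
    case True
    have "continuous_on {p..b} (\<lambda>q. ln (1 / (1 - q)))"
      using b1 by (intro continuous_intros) auto
    then show ?thesis using True by (simp add: Dkl_def)
  next
    case False
    then show ?thesis using p p1 b1 unfolding Dkl_def by (intro continuous_intros) auto
  qed
  have "closed T" unfolding Teq by (intro continuous_on_closed_Collect_le cont continuous_intros closed_atLeastAtMost)
  moreover have "bounded T" unfolding Teq by (rule bounded_subset[of "{p..b}"]) auto
  ultimately have "compact T" by (simp add: compact_eq_bounded_closed)
  moreover have "p \<in> T" unfolding T_def using p kl_self[OF p] d by (auto simp: zero_ereal_def)
  ultimately obtain u where "u \<in> T" "\<forall>t\<in>T. t \<le> u" using compact_attains_sup[of T] by blast
  then show ?thesis unfolding T_def by blast
qed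

lemma ucb_props:
  assumes N: "N > 0" and p: "0 \<le> S / N" "S / N \<le> 1" and d: "\<delta> > 0"
  shows "S / N \<le> kl_ucb \<delta> N S"
    and "\<And>q. q \<in> {S/N..1} \<Longrightarrow> ereal N * kl_bern (S/N) q \<le> ereal \<delta> \<Longrightarrow> q \<le> kl_ucb \<delta> N S"
proof -
  obtain u where u: "u \<in> {S/N..1} \<and> ereal N * kl_bern (S/N) u \<le> ereal \<delta>"
     "\<forall>q. q \<in> {S/N..1} \<and> ereal N * kl_bern (S/N) q \<le> ereal \<delta> \<longrightarrow> q \<le> u"
    using ucb_exists[OF N p d] by blast
  have eq: "kl_ucb \<delta> N S = u" unfolding kl_ucb_def using N
    by (simp, intro Greatest_equality) (use u in auto)
  show "S / N \<le> kl_ucb \<delta> N S" using eq u by auto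
  fix q assume "q \<in> {S/N..1}" "ereal N * kl_bern (S/N) q \<le> ereal \<delta>"
  then show "q \<le> kl_ucb \<delta> N S" using eq u by auto
qed

lemma ucb_event:
  assumes N: "N > 0" and p: "0 \<le> S / N" "S / N \<le> 1" and d: "\<delta> > 0"
    and mu: "0 < \<mu>" "\<mu> < 1" and lt: "kl_ucb \<delta> N S < \<mu>"
  shows "S / N < \<mu> \<and> \<delta> < N * Dkl (S / N) \<mu>"
proof -
  have pm: "S / N < \<mu>" using ucb_props(1)[OF N p d] lt by simp
  moreover have "\<delta> < N * Dkl (S / N) \<mu>"
  proof (rule ccontr)
    assume "\<not> ?thesis"
    then have "ereal N * kl_bern (S/N) \<mu> \<le> ereal \<delta>"
      using kl_eq_D[OF p(1) _ mu(2), of ] pm by simp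
    then have "\<mu> \<le> kl_ucb \<delta> N S" using ucb_props(2)[OF N p d, of \<mu>] pm mu by simp
    then show False using lt by simp
  qed
  ultimately show ?thesis by simp
qed




lemma xlnx_cont: assumes "a > 0" shows "continuous_on {0..a} (\<lambda>x::real. x * ln x)"
proof (clarsimp simp: continuous_on_eq_continuous_within)
  fix x :: real assume x: "0 \<le> x" "x \<le> a"
  show "continuous (at x within {0..a}) (\<lambda>x. x * ln x)"
  proof (cases "x = 0")
    case True
    have "((\<lambda>x::real. x * ln x) \<longlongrightarrow> 0) (at_right 0)" by real_asymp
    then show ?thesis using True assms by (simp add: continuous_within at_within_Icc_at_right)
  next
    case False
    then have "isCont (\<lambda>x. x * ln x) x" by (intro continuous_intros) auto
    then show ?thesis by (rule continuous_at_imp_continuous_at_within)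
  qed
qed

lemma D_cont_p:
  assumes "0 < \<mu>" "\<mu> < 1"
  shows "continuous_on {0..\<mu>} (\<lambda>p. Dkl p \<mu>)"
proof -
  have eq: "\<And>p. p \<in> {0..\<mu>} \<Longrightarrow> Dkl p \<mu> = (p * ln p - p * ln \<mu>) + (1 - p) * ln ((1 - p) / (1 - \<mu>))"
  proof -
    fix p assume p: "p \<in> {0..\<mu>}"
    show "Dkl p \<mu> = (p * ln p - p * ln \<mu>) + (1 - p) * ln ((1 - p) / (1 - \<mu>))"
    proof (cases "p = 0")
      case True then show ?thesis by (simp add: Dkl_def)
    next
      case False then show ?thesis using p assms by (simp add: Dkl_def ln_div right_diff_distrib)
    qed
  qed
  have "continuous_on {0..\<mu>} (\<lambda>p. (p * ln p - p * ln \<mu>) + (1 - p) * ln ((1 - p) / (1 - \<mu>)))"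
    using assms by (intro continuous_intros xlnx_cont) auto
  then show ?thesis by (rule continuous_on_eq) (simp add: eq)
qed

lemma lambda_identity:
  assumes "0 < z" "z < \<mu>" "\<mu> < 1"
  defines "l \<equiv> ln (z * (1 - \<mu>) / (\<mu> * (1 - z)))"
  shows "l * z - ln (1 - \<mu> + \<mu> * exp l) = Dkl z \<mu>" and "l \<le> 0"
proof -
  have pos: "z * (1 - \<mu>) / (\<mu> * (1 - z)) > 0" using assms by auto
  have el: "exp l = z * (1 - \<mu>) / (\<mu> * (1 - z))" unfolding l_def using pos by simp
  have "1 - \<mu> + \<mu> * exp l = (1 - \<mu>) / (1 - z)" unfolding el using assms by (simp add: field_simps)
  then have h1: "ln (1 - \<mu> + \<mu> * exp l) = ln (1 - \<mu>) - ln (1 - z)" using assms by (simp add: ln_div)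
  have h2: "l = ln z + ln (1 - \<mu>) - ln \<mu> - ln (1 - z)" unfolding l_def using assms
    by (simp add: ln_div ln_mult)
  have h3: "Dkl z \<mu> = z * (ln z - ln \<mu>) + (1 - z) * (ln (1 - z) - ln (1 - \<mu>))"
    using assms by (simp add: Dkl_def ln_div)
  have "l * z - ln (1 - \<mu> + \<mu> * exp l) = (ln z + ln (1 - \<mu>) - ln \<mu> - ln (1 - z)) * z - (ln (1 - \<mu>) - ln (1 - z))"
    using h1 h2 by simp
  also have "\<dots> = Dkl z \<mu>" unfolding h3 by (simp add: algebra_simps)
  finally show "l * z - ln (1 - \<mu> + \<mu> * exp l) = Dkl z \<mu>" .
  have "z * (1 - \<mu>) / (\<mu> * (1 - z)) \<le> 1" using assms by (simp add: field_simps mult_mono)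
  then show "l \<le> 0" unfolding l_def using pos by simp
qed

lemma D_self: "Dkl \<mu> \<mu> = 0" by (simp add: Dkl_def)

lemma slice_lambda:
  assumes mu: "0 < \<mu>" "\<mu> < 1" and c: "c > 0" and ne: "P \<noteq> {}"
    and P: "P = {p \<in> {0..\<mu>}. c < Dkl p \<mu>}"
  shows "\<exists>l. \<forall>p\<in>P. c \<le> l * p - ln (1 - \<mu> + \<mu> * exp l)"
proof -
  define z where "z = Sup P"
  have bdd: "bdd_above P" unfolding P by (rule bdd_aboveI[of _ \<mu>]) auto
  have zcl: "z \<in> closure P" unfolding z_def using closure_contains_Sup[OF ne bdd] .
  have clQ: "closed {p \<in> {0..\<mu>}. c \<le> Dkl p \<mu>}"
    by (intro continuous_on_closed_Collect_le D_cont_p mu continuous_intros closed_atLeastAtMost)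
  have "closure P \<subseteq> {p \<in> {0..\<mu>}. c \<le> Dkl p \<mu>}"
    by (rule closure_minimal[OF _ clQ]) (auto simp: P)
  with zcl have z: "0 \<le> z" "z \<le> \<mu>" "c \<le> Dkl z \<mu>" by auto
  have zmu: "z < \<mu>" using z D_self[of \<mu>] c by (cases "z = \<mu>") auto
  have upper: "\<And>p. p \<in> P \<Longrightarrow> p \<le> z" unfolding z_def using bdd by (intro cSup_upper)
  have z0: "z > 0"
  proof (rule ccontr)
    assume "\<not> z > 0"
    then have z0: "z = 0" using z by auto
    obtain p0 where "p0 \<in> P" using ne by auto
    then have "p0 = 0" using upper[of p0] z0 P by auto
    with \<open>p0 \<in> P\<close> have D0: "c < Dkl 0 \<mu>" using P by auto
    from D_cont_p[OF mu] have "continuous (at 0 within {0..\<mu>}) (\<lambda>p. Dkl p \<mu>)"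
      using mu by (simp add: continuous_on_eq_continuous_within)
    then have "((\<lambda>p. Dkl p \<mu>) \<longlongrightarrow> Dkl 0 \<mu>) (at_right 0)"
      using mu by (simp add: continuous_within at_within_Icc_at_right)
    then have "eventually (\<lambda>p. c < Dkl p \<mu>) (at_right 0)"
      using D0 by (rule order_tendstoD)
    then obtain e where e: "e > 0" "\<And>p. 0 < p \<Longrightarrow> p < e \<Longrightarrow> c < Dkl p \<mu>"
      unfolding eventually_at_right_field by auto
    define q where "q = min (e / 2) \<mu>"
    have "q \<in> P" unfolding P q_def using e mu by auto
    moreover have "q > 0" unfolding q_def using e mu by auto
    ultimately show False using upper[of q] z0 by auto
  qed
  define l where "l = ln (z * (1 - \<mu>) / (\<mu> * (1 - z)))"
  have li: "l * z - ln (1 - \<mu> + \<mu> * exp l) = Dkl z \<mu>" "l \<le> 0"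
    using lambda_identity[OF z0 zmu mu(2)] unfolding l_def by auto
  show ?thesis
  proof (intro exI ballI)
    fix p assume "p \<in> P"
    then have "p \<le> z" by (rule upper)
    then have "l * z \<le> l * p" using li(2) by (simp add: mult_left_mono_neg)
    then show "c \<le> l * p - ln (1 - \<mu> + \<mu> * exp l)" using li(1) z(3) by simp
  qed
qed




locale kls = prob_space M for M :: "'a measure" +
  fixes X :: "nat \<Rightarrow> 'a \<Rightarrow> real" and F :: "nat \<Rightarrow> 'a measure"
    and \<epsilon> :: "nat \<Rightarrow> 'a \<Rightarrow> real" and \<mu> :: real
  assumes range01: "\<And>t \<omega>. t \<ge> 1 \<Longrightarrow> \<omega> \<in> space M \<Longrightarrow> X t \<omega> \<in> {0..1}"
    and mean: "\<And>t. t \<ge> 1 \<Longrightarrow> expectation (X t) = \<mu>"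
    and sub: "\<And>t. subalgebra M (F t)"
    and incr: "\<And>s t. s \<le> t \<Longrightarrow> sets (F s) \<subseteq> sets (F t)"
    and adapted: "\<And>s t. 1 \<le> s \<Longrightarrow> s \<le> t \<Longrightarrow> X s \<in> borel_measurable (F t)"
    and future_indep: "\<And>s t. t < s \<Longrightarrow>
          indep_set (sets (F t)) {X s -` A \<inter> space M | A. A \<in> sets borel}"
    and eps01: "\<And>t \<omega>. t \<ge> 1 \<Longrightarrow> \<omega> \<in> space M \<Longrightarrow> \<epsilon> t \<omega> \<in> {0, 1}"
    and eps_pred: "\<And>t. t \<ge> 1 \<Longrightarrow> \<epsilon> t \<in> borel_measurable (F (t - 1))"
begin

lemma mF: assumes "s \<le> t" "f \<in> borel_measurable (F s)" shows "f \<in> borel_measurable (F t)"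
proof (rule measurable_from_subalg[OF _ assms(2)])
  show "subalgebra (F t) (F s)" using sub[of s] sub[of t] incr[OF assms(1)]
    by (auto simp: subalgebra_def)
qed

lemma mM: assumes "f \<in> borel_measurable (F t)" shows "f \<in> borel_measurable M"
  using measurable_from_subalg[OF sub assms] .

lemma X_meas: "1 \<le> s \<Longrightarrow> X s \<in> borel_measurable M"
  using mM[OF adapted[of s s]] by simp

lemma eps_meas: "1 \<le> s \<Longrightarrow> \<epsilon> s \<in> borel_measurable M"
  using mM[OF eps_pred] by simp

lemma bdd_integrable:
  fixes f :: "'a \<Rightarrow> real"
  assumes "f \<in> borel_measurable M" "\<And>\<omega>. \<omega> \<in> space M \<Longrightarrow> \<bar>f \<omega>\<bar> \<le> B"
  shows "integrable M f"
  using assms by (intro integrable_const_bound[where B=B]) (auto intro!: AE_I2)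

lemma mu01: "0 \<le> \<mu>" "\<mu> \<le> 1"
proof -
  have i: "integrable M (X 1)" using X_meas[of 1] range01[of 1]
    by (intro bdd_integrable[where B=1]) fastforce+
  have "expectation (X 1) \<ge> 0" using range01[of 1] by (intro integral_nonneg_AE AE_I2) auto
  then show "0 \<le> \<mu>" using mean[of 1] by simp
  have "expectation (X 1) \<le> expectation (\<lambda>_. 1)" using range01[of 1] i
    by (intro integral_mono_AE AE_I2) auto
  then show "\<mu> \<le> 1" using mean[of 1] by (simp add: prob_space)
qed

definition \<phi> :: "real \<Rightarrow> real" where "\<phi> l = ln (1 - \<mu> + \<mu> * exp l)"

lemma phi_pos: "1 - \<mu> + \<mu> * exp l > 0"
proof (cases "\<mu> = 0")
  case False
  then have "\<mu> * exp l > 0" using mu01 by simp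
  then show ?thesis using mu01 by (intro add_nonneg_pos) auto
qed simp

lemma exp_phi: "exp (\<phi> l) = 1 - \<mu> + \<mu> * exp l"
  unfolding \<phi>_def using phi_pos by simp

lemma exp_convex_01: fixes x :: real assumes "0 \<le> x" "x \<le> 1" shows "exp (l * x) \<le> 1 - x + x * exp l"
proof -
  have "exp ((1 - x) *\<^sub>R 0 + x *\<^sub>R l) \<le> (1 - x) * exp 0 + x * exp l"
    using convex_onD[OF exp_convex, of x 0 l] assms by simp
  then show ?thesis by (simp add: mult.commute)
qed

lemma Z_int: "1 \<le> t \<Longrightarrow> integrable M (\<lambda>\<omega>. exp (l * X t \<omega> - \<phi> l))"
proof -
  assume t: "1 \<le> t"
  have "\<bar>exp (l * X t \<omega> - \<phi> l)\<bar> \<le> exp (\<bar>l\<bar> + \<bar>\<phi> l\<bar>)" if "\<omega> \<in> space M" for \<omega>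
  proof -
    have "\<bar>l * X t \<omega>\<bar> \<le> \<bar>l\<bar>" using range01[OF t that] by (simp add: abs_mult mult_left_le)
    then show ?thesis by simp
  qed
  then show ?thesis using X_meas[OF t] by (intro bdd_integrable) auto
qed

lemma Z_le1: assumes t: "1 \<le> t" shows "expectation (\<lambda>\<omega>. exp (l * X t \<omega> - \<phi> l)) \<le> 1"
proof -
  have iX: "integrable M (X t)" using X_meas[OF t] range01[OF t]
    by (intro bdd_integrable[where B=1]) fastforce+
  have "expectation (\<lambda>\<omega>. exp (l * X t \<omega> - \<phi> l))
      \<le> expectation (\<lambda>\<omega>. (1 - X t \<omega> + X t \<omega> * exp l) / exp (\<phi> l))"
  proof (intro integral_mono_AE Z_int t AE_I2)
    show "integrable M (\<lambda>\<omega>. (1 - X t \<omega> + X t \<omega> * exp l) / exp (\<phi> l))"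
      using iX by auto
    fix \<omega> assume "\<omega> \<in> space M"
    then have "exp (l * X t \<omega>) \<le> 1 - X t \<omega> + X t \<omega> * exp l"
      using range01[OF t] exp_convex_01 by auto
    then show "exp (l * X t \<omega> - \<phi> l) \<le> (1 - X t \<omega> + X t \<omega> * exp l) / exp (\<phi> l)"
      by (simp add: exp_diff divide_right_mono)
  qed
  also have "\<dots> = (1 - \<mu> + \<mu> * exp l) / exp (\<phi> l)"
    using iX mean[OF t] by (simp add: prob_space)
  also have "\<dots> = 1" using exp_phi[of l] phi_pos[of l] by simp
  finally show ?thesis .
qed

definition W :: "real \<Rightarrow> nat \<Rightarrow> 'a \<Rightarrow> real" where
  "W l m \<omega> = exp (\<Sum>s=1..m. \<epsilon> s \<omega> * (l * X s \<omega> - \<phi> l))"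

lemma W_measF: "W l m \<in> borel_measurable (F m)"
proof -
  have "(\<lambda>\<omega>. \<epsilon> s \<omega> * (l * X s \<omega> - \<phi> l)) \<in> borel_measurable (F m)" if "s \<in> {1..m}" for s
  proof -
    have "\<epsilon> s \<in> borel_measurable (F m)" using that by (intro mF[OF _ eps_pred]) auto
    moreover have "X s \<in> borel_measurable (F m)" using that by (intro adapted) auto
    ultimately show ?thesis by measurable
  qed
  then have "(\<lambda>\<omega>. \<Sum>s=1..m. \<epsilon> s \<omega> * (l * X s \<omega> - \<phi> l)) \<in> borel_measurable (F m)"
    by (intro borel_measurable_sum) auto
  then show ?thesis unfolding W_def by measurable
qed

lemma W_bound: "\<omega> \<in> space M \<Longrightarrow> \<bar>W l m \<omega>\<bar> \<le> exp (real m * (\<bar>l\<bar> + \<bar>\<phi> l\<bar>))"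
proof -
  assume \<omega>: "\<omega> \<in> space M"
  have "(\<Sum>s=1..m. \<epsilon> s \<omega> * (l * X s \<omega> - \<phi> l)) \<le> of_nat (card {1..m}) * (\<bar>l\<bar> + \<bar>\<phi> l\<bar>)"
  proof (rule sum_bounded_above)
    fix s assume s: "s \<in> {1..m}"
    have e: "\<epsilon> s \<omega> \<in> {0,1}" using eps01 s \<omega> by auto
    have "\<bar>l * X s \<omega>\<bar> \<le> \<bar>l\<bar>" using range01[OF _ \<omega>, of s] s by (simp add: abs_mult mult_left_le)
    then show "\<epsilon> s \<omega> * (l * X s \<omega> - \<phi> l) \<le> \<bar>l\<bar> + \<bar>\<phi> l\<bar>" using e by auto
  qed
  then show ?thesis unfolding W_def by simp
qed

lemma W_int: "integrable M (W l m)"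
  using mM[OF W_measF] W_bound by (intro bdd_integrable) auto

lemma W_le1: "expectation (W l m) \<le> 1"
proof (induction m)
  case 0
  then show ?case by (simp add: W_def prob_space)
next
  case (Suc m)
  define e where "e = \<epsilon> (Suc m)"
  define Z where "Z = (\<lambda>\<omega>. exp (l * X (Suc m) \<omega> - \<phi> l))"
  define Y where "Y = (\<lambda>\<omega>. W l m \<omega> * e \<omega>)"
  have eF: "e \<in> borel_measurable (F m)" unfolding e_def using eps_pred[of "Suc m"] by simp
  have eM: "e \<in> borel_measurable M" using mM[OF eF] .
  have e01: "\<And>\<omega>. \<omega> \<in> space M \<Longrightarrow> e \<omega> \<in> {0,1}" unfolding e_def using eps01 by auto
  have YF: "Y \<in> borel_measurable (F m)" unfolding Y_def using W_measF eF by measurable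
  have YM: "Y \<in> borel_measurable M" using mM[OF YF] .
  have XM: "X (Suc m) \<in> borel_measurable M" by (rule X_meas) simp
  have iY: "integrable M Y"
  proof (rule bdd_integrable[OF YM])
    fix \<omega> assume "\<omega> \<in> space M"
    then show "\<bar>Y \<omega>\<bar> \<le> exp (real m * (\<bar>l\<bar> + \<bar>\<phi> l\<bar>))"
      using W_bound[of \<omega> l m] e01[of \<omega>] unfolding Y_def by auto
  qed
  have iZ: "integrable M Z" unfolding Z_def by (rule Z_int) simp
  have iW1: "integrable M (\<lambda>\<omega>. W l m \<omega> * (1 - e \<omega>))"
  proof (rule bdd_integrable)
    show "(\<lambda>\<omega>. W l m \<omega> * (1 - e \<omega>)) \<in> borel_measurable M" using mM[OF W_measF] eM by measurable
    fix \<omega> assume "\<omega> \<in> space M"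
    then show "\<bar>W l m \<omega> * (1 - e \<omega>)\<bar> \<le> exp (real m * (\<bar>l\<bar> + \<bar>\<phi> l\<bar>))"
      using W_bound[of \<omega> l m] e01[of \<omega>] by auto
  qed
  have ind: "indep_set (sets (F m)) {X (Suc m) -` A \<inter> space M | A. A \<in> sets borel}"
    by (rule future_indep) simp
  have "indep_var borel Y borel (X (Suc m))"
    unfolding indep_var_def indep_vars_def2
  proof (intro conjI ballI)
    fix i :: bool show "random_variable (case_bool borel borel i) (case_bool Y (X (Suc m)) i)"
      using YM XM by (cases i) auto
  next
    show "indep_sets (\<lambda>i. {case_bool Y (X (Suc m)) i -` A \<inter> space M |A. A \<in> sets (case_bool borel borel i)}) UNIV"
    proof (rule indep_sets_mono_sets[OF ind[unfolded indep_set_def]])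
      fix i :: bool assume "i \<in> UNIV"
      show "{case_bool Y (X (Suc m)) i -` A \<inter> space M |A. A \<in> sets (case_bool borel borel i)}
          \<subseteq> case_bool (sets (F m)) {X (Suc m) -` A \<inter> space M |A. A \<in> sets borel} i"
      proof (cases i)
        case True
        have "Y -` A \<inter> space M \<in> sets (F m)" if "A \<in> sets borel" for A
          using measurable_sets[OF YF that] sub[of m] by (simp add: subalgebra_def)
        then show ?thesis using True by auto
      next
        case False then show ?thesis by auto
      qed
    qed
  qed
  then have "indep_var borel (id \<circ> Y) borel ((\<lambda>x. exp (l * x - \<phi> l)) \<circ> X (Suc m))"
    by (rule indep_var_compose) auto
  then have indYZ: "indep_var borel Y borel Z" unfolding Z_def by (simp add: comp_def)
  have prod: "expectation (\<lambda>\<omega>. Y \<omega> * Z \<omega>) = expectation Y * expectation Z"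
    and iYZ: "integrable M (\<lambda>\<omega>. Y \<omega> * Z \<omega>)"
    using indep_var_lebesgue_integral[OF indYZ iY iZ] indep_var_integrable[OF indYZ iY iZ] by auto
  have Ynn: "expectation Y \<ge> 0"
  proof (intro integral_nonneg_AE AE_I2)
    fix \<omega> assume "\<omega> \<in> space M"
    then have "e \<omega> \<ge> 0" using e01 by fastforce
    moreover have "W l m \<omega> \<ge> 0" by (simp add: W_def)
    ultimately show "0 \<le> Y \<omega>" unfolding Y_def by simp
  qed
  have "expectation (W l (Suc m)) = expectation (\<lambda>\<omega>. W l m \<omega> * (1 - e \<omega>) + Y \<omega> * Z \<omega>)"
  proof (rule Bochner_Integration.integral_cong[OF refl])
    fix \<omega> assume \<omega>: "\<omega> \<in> space M"
    have "W l (Suc m) \<omega> = W l m \<omega> * exp (e \<omega> * (l * X (Suc m) \<omega> - \<phi> l))"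
      unfolding W_def e_def by (simp add: exp_add)
    also have "\<dots> = W l m \<omega> * (1 - e \<omega>) + Y \<omega> * Z \<omega>"
      using e01[OF \<omega>] unfolding Y_def Z_def by auto
    finally show "W l (Suc m) \<omega> = W l m \<omega> * (1 - e \<omega>) + Y \<omega> * Z \<omega>" .
  qed
  also have "\<dots> = expectation (\<lambda>\<omega>. W l m \<omega> * (1 - e \<omega>)) + expectation Y * expectation Z"
    using iW1 iYZ prod by simp
  also have "\<dots> \<le> expectation (\<lambda>\<omega>. W l m \<omega> * (1 - e \<omega>)) + expectation Y"
    using Z_le1[of "Suc m" l] Ynn unfolding Z_def by (simp add: mult_left_le)
  also have "\<dots> = expectation (\<lambda>\<omega>. W l m \<omega> * (1 - e \<omega>) + Y \<omega>)"
    using iW1 iY by simp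
  also have "\<dots> = expectation (W l m)"
    unfolding Y_def by (rule Bochner_Integration.integral_cong) (auto simp: algebra_simps)
  also have "\<dots> \<le> 1" by (rule Suc.IH)
  finally show ?case .
qed

lemma chernoff:
  assumes "a > 0"
  shows "measure M {\<omega> \<in> space M. a \<le> W l m \<omega>} \<le> 1 / a"
proof -
  have "measure M {\<omega> \<in> space M. a \<le> W l m \<omega>} \<le> expectation (W l m) / a"
    by (rule integral_Markov_inequality_measure[OF W_int _ _ assms, of "space M"])
       (auto simp: W_def)
  also have "\<dots> \<le> 1 / a" using W_le1 assms by (simp add: divide_right_mono)
  finally show ?thesis .
qed

end



lemma slice_find:
  fixes r x :: real
  assumes "r > 1" "1 \<le> x" "x \<le> r ^ Suc K"
  shows "\<exists>k\<in>{1..Suc K}. r ^ (k - 1) \<le> x \<and> x \<le> r ^ k"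
  using assms(3)
proof (induction K)
  case 0 then show ?case using assms by auto
next
  case (Suc K)
  show ?case
  proof (cases "x \<le> r ^ Suc K")
    case True then show ?thesis using Suc.IH by fastforce
  next
    case False
    then show ?thesis using Suc.prems by (intro bexI[of _ "Suc (Suc K)"]) auto
  qed
qed

context kls begin

lemma sums_facts:
  fixes n :: nat
  assumes \<omega>: "\<omega> \<in> space M"
  defines "N \<equiv> (\<Sum>s=1..n. \<epsilon> s \<omega>)" and "S \<equiv> (\<Sum>s=1..n. \<epsilon> s \<omega> * X s \<omega>)"
  shows "0 \<le> S" "S \<le> N" "N > 0 \<Longrightarrow> 1 \<le> N"
proof -
  have e: "\<And>s. s \<in> {1..n} \<Longrightarrow> \<epsilon> s \<omega> \<in> {0,1}" using eps01 \<omega> by auto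
  have x: "\<And>s. s \<in> {1..n} \<Longrightarrow> X s \<omega> \<in> {0..1}" using range01 \<omega> by auto
  show "0 \<le> S" unfolding S_def using e x by (intro sum_nonneg) fastforce
  show "S \<le> N" unfolding S_def N_def using e x by (intro sum_mono) fastforce
  assume "N > 0"
  then obtain s where s: "s \<in> {1..n}" "\<epsilon> s \<omega> \<noteq> 0" unfolding N_def
    by (metis (no_types, lifting) less_irrefl sum.neutral)
  then have "\<epsilon> s \<omega> = 1" using e by auto
  moreover have "\<epsilon> s \<omega> \<le> N" unfolding N_def using s e
    by (intro member_le_sum) fastforce+
  ultimately show "1 \<le> N" by simp
qed

lemma ucb_nonneg:
  assumes \<omega>: "\<omega> \<in> space M" and d: "\<delta> > 0"
  shows "0 \<le> kl_ucb \<delta> (\<Sum>s=1..n. \<epsilon> s \<omega>) (\<Sum>s=1..n. \<epsilon> s \<omega> * X s \<omega>)"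
proof (cases "(\<Sum>s=1..n. \<epsilon> s \<omega>) = 0")
  case True then show ?thesis by (simp add: kl_ucb_def)
next
  case False
  note sf = sums_facts[OF \<omega>, of n]
  have N: "(\<Sum>s=1..n. \<epsilon> s \<omega>) > 0" using False sf by linarith
  have p: "0 \<le> (\<Sum>s=1..n. \<epsilon> s \<omega> * X s \<omega>) / (\<Sum>s=1..n. \<epsilon> s \<omega>)"
       "(\<Sum>s=1..n. \<epsilon> s \<omega> * X s \<omega>) / (\<Sum>s=1..n. \<epsilon> s \<omega>) \<le> 1"
    using sf N by (auto simp: divide_le_eq)
  show ?thesis using ucb_props(1)[OF N p d] p by linarith
qed

lemma W_eq: "W l n \<omega> = exp (l * (\<Sum>s=1..n. \<epsilon> s \<omega> * X s \<omega>) - \<phi> l * (\<Sum>s=1..n. \<epsilon> s \<omega>))"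
proof -
  have "(\<Sum>s=1..n. \<epsilon> s \<omega> * (l * X s \<omega> - \<phi> l)) = (\<Sum>s=1..n. l * (\<epsilon> s \<omega> * X s \<omega>) - \<phi> l * \<epsilon> s \<omega>)"
    by (simp add: algebra_simps)
  also have "\<dots> = l * (\<Sum>s=1..n. \<epsilon> s \<omega> * X s \<omega>) - \<phi> l * (\<Sum>s=1..n. \<epsilon> s \<omega>)"
    by (simp add: sum_subtractf sum_distrib_left)
  finally show ?thesis unfolding W_def by simp
qed

end



context kls begin

lemma main:
  assumes d: "\<delta> > 0" and n2: "n \<ge> 2"
  defines "E \<equiv> {\<omega> \<in> space M.
            kl_ucb \<delta> (\<Sum>s=1..n. \<epsilon> s \<omega>) (\<Sum>s=1..n. \<epsilon> s \<omega> * X s \<omega>) < \<mu>}"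
  shows "measure M E \<le> exp 1 * real_of_int \<lceil>\<delta> * ln (real n)\<rceil> * exp (- \<delta>)"
proof -
  define Nf where "Nf = (\<lambda>\<omega>. \<Sum>s=1..n. \<epsilon> s \<omega>)"
  define Sf where "Sf = (\<lambda>\<omega>. \<Sum>s=1..n. \<epsilon> s \<omega> * X s \<omega>)"
  have lnn: "ln (real n) > 0" using n2 by simp
  have K1: "\<lceil>\<delta> * ln (real n)\<rceil> \<ge> 1" using d lnn by (simp add: le_ceiling_iff)
  have Kge: "real_of_int \<lceil>\<delta> * ln (real n)\<rceil> \<ge> 1" using K1 by linarith
  have rhs_nn: "exp 1 * real_of_int \<lceil>\<delta> * ln (real n)\<rceil> * exp (- \<delta>) \<ge> 0" using Kge by simp
  show ?thesis
  proof (cases "E \<in> sets M")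
    case False then show ?thesis using rhs_nn by (simp add: measure_notin_sets)
  next
    case Esets: True
    show ?thesis
    proof (cases "\<delta> \<le> 1")
      case True
      have "exp 1 * 1 * exp (-1) \<le> exp 1 * real_of_int \<lceil>\<delta> * ln (real n)\<rceil> * exp (- \<delta>)"
        using Kge True by (intro mult_mono) auto
      moreover have "exp 1 * 1 * exp (-1) = (1::real)" by (simp add: exp_minus)
      ultimately show ?thesis using prob_le_1[of E] by linarith
    next
      case False
      then have d1: "\<delta> > 1" by simp
      show ?thesis
      proof (cases "\<mu> = 0")
        case True
        have "E = {}"
        proof (intro equalityI subsetI)
          fix \<omega> assume "\<omega> \<in> E"
          then show "\<omega> \<in> {}" using ucb_nonneg[OF _ d, of \<omega> n] True unfolding E_def by auto
        qed simp
        then show ?thesis using rhs_nn by simp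
      next
        case mu0: False
        show ?thesis
        proof (cases "\<mu> = 1")
          case True
          have AE1: "AE \<omega> in M. \<forall>s\<in>{1..n}. X s \<omega> = 1"
          proof (rule AE_finite_allI)
            fix s :: nat assume "s \<in> {1..n}"
            then have s: "1 \<le> s" by simp
            have i: "integrable M (\<lambda>\<omega>. 1 - X s \<omega>)" using X_meas[OF s] range01[OF s]
              by (intro bdd_integrable[where B=1]) fastforce+
            have "expectation (\<lambda>\<omega>. 1 - X s \<omega>) = 0"
              using i mean[OF s] True X_meas[OF s] range01[OF s]
              by (subst Bochner_Integration.integral_diff) (auto simp: prob_space intro!: bdd_integrable[where B=1])
            then have "AE \<omega> in M. 1 - X s \<omega> = 0"
              using integral_nonneg_eq_0_iff_AE[OF i] range01[OF s] by (auto intro!: AE_I2)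
            then show "AE \<omega> in M. X s \<omega> = 1" by auto
          qed simp
          have H: "\<omega> \<notin> E" if \<omega>: "\<omega> \<in> space M" "\<forall>s\<in>{1..n}. X s \<omega> = 1" for \<omega>
          proof
            assume "\<omega> \<in> E"
            then have lt: "kl_ucb \<delta> (Nf \<omega>) (Sf \<omega>) < 1" unfolding E_def Nf_def Sf_def using True by auto
            have SN: "Sf \<omega> = Nf \<omega>" unfolding Sf_def Nf_def using \<omega>(2) by (intro sum.cong) auto
            show False
            proof (cases "Nf \<omega> = 0")
              case True then show False using lt by (simp add: kl_ucb_def)
            next
              case False
              then have N: "Nf \<omega> > 0" using sums_facts[OF \<omega>(1), of n] unfolding Nf_def Sf_def by linarith
              have p: "0 \<le> Sf \<omega> / Nf \<omega>" "Sf \<omega> / Nf \<omega> \<le> 1" using SN N by auto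
              show False using ucb_props(1)[OF N p d] SN N lt by simp
            qed
          qed
          have "AE \<omega> in M. \<omega> \<notin> E" using AE1 AE_space by eventually_elim (use H in blast)
          then have "emeasure M E = 0" using AE_iff_measurable[OF Esets, of "\<lambda>\<omega>. \<omega> \<notin> E"]
            unfolding E_def by auto
          then show ?thesis using rhs_nn by (simp add: measure_def)
        next
          case mu1: False
          have mu: "0 < \<mu>" "\<mu> < 1" using mu0 mu1 mu01 by auto
          define r where "r = \<delta> / (\<delta> - 1)"
          have r1: "r > 1" unfolding r_def using d1 by simp
          define K where "K = nat \<lceil>\<delta> * ln (real n)\<rceil>"
          have Kreal: "real K = real_of_int \<lceil>\<delta> * ln (real n)\<rceil>" unfolding K_def using K1 by simp
          have K1': "K \<ge> 1" unfolding K_def using K1 by linarith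
          have lnr: "ln r \<ge> 1 / \<delta>"
          proof -
            have "ln (1 - 1/\<delta>) \<le> (1 - 1/\<delta>) - 1" using d1 by (intro ln_le_minus_one) (simp add: field_simps)
            moreover have "ln r = - ln (1 - 1/\<delta>)" unfolding r_def using d1
              by (simp add: ln_div field_simps)
            ultimately show ?thesis by simp
          qed
          have "real K * ln r \<ge> \<delta> * ln (real n) * (1 / \<delta>)"
            using Kreal lnr d lnn by (intro mult_mono) (auto, linarith)
          then have "ln (r ^ K) \<ge> ln (real n)" using d r1 by (simp add: ln_realpow)
          then have rK: "r ^ K \<ge> real n" using r1 n2 by (subst (asm) ln_le_cancel_iff) auto
          define c where "c = (\<lambda>k::nat. \<delta> / r ^ k)"
          define P where "P = (\<lambda>k. {p \<in> {0..\<mu>}. c k < Dkl p \<mu>})"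
          define lam where "lam = (\<lambda>k. SOME l. \<forall>p\<in>P k. c k \<le> l * p - \<phi> l)"
          define B where "B = (\<lambda>k. {\<omega> \<in> space M. exp (\<delta> - 1) \<le> W (lam k) n \<omega>})"
          have Bsets: "B k \<in> sets M" for k
            unfolding B_def using mM[OF W_measF] by measurable
          have Bmeas: "measure M (B k) \<le> exp (1 - \<delta>)" for k
            using chernoff[of "exp (\<delta> - 1)" "lam k" n] unfolding B_def by (simp add: exp_diff exp_minus)
          have lam: "\<forall>p\<in>P k. c k \<le> lam k * p - \<phi> (lam k)" if "P k \<noteq> {}" for k
          proof -
            have "\<exists>l. \<forall>p\<in>P k. c k \<le> l * p - ln (1 - \<mu> + \<mu> * exp l)"
              using r1 d by (intro slice_lambda[OF mu _ that]) (auto simp: c_def P_def)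
            then have "\<exists>l. \<forall>p\<in>P k. c k \<le> l * p - \<phi> l" unfolding \<phi>_def .
            then show ?thesis unfolding lam_def by (rule someI_ex)
          qed
          have sub_union: "E \<subseteq> (\<Union>k\<in>{1..K}. B k)"
          proof
            fix \<omega> assume "\<omega> \<in> E"
            then have \<omega>: "\<omega> \<in> space M" and lt: "kl_ucb \<delta> (Nf \<omega>) (Sf \<omega>) < \<mu>"
              unfolding E_def Nf_def Sf_def by auto
            have sf: "0 \<le> Sf \<omega>" "Sf \<omega> \<le> Nf \<omega>" "Nf \<omega> > 0 \<Longrightarrow> 1 \<le> Nf \<omega>"
              using sums_facts[OF \<omega>, of n] unfolding Nf_def Sf_def by auto
            have N: "Nf \<omega> > 0"
            proof (rule ccontr)
              assume "\<not> Nf \<omega> > 0"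
              then have "Nf \<omega> = 0" using sf by linarith
              then show False using lt mu by (simp add: kl_ucb_def)
            qed
            have N1: "Nf \<omega> \<ge> 1" using sf N by simp
            have Nn: "Nf \<omega> \<le> real n"
            proof -
              have "Nf \<omega> \<le> of_nat (card {1..n}) * 1" unfolding Nf_def
                using eps01 \<omega> by (intro sum_bounded_above) fastforce
              then show ?thesis by simp
            qed
            define p where "p = Sf \<omega> / Nf \<omega>"
            have p: "0 \<le> Sf \<omega> / Nf \<omega>" "Sf \<omega> / Nf \<omega> \<le> 1" using sf N by (auto simp: divide_le_eq)
            have ev: "p < \<mu> \<and> \<delta> < Nf \<omega> * Dkl p \<mu>"
              unfolding p_def by (rule ucb_event[OF N p d mu lt])
            obtain K' where K': "K = Suc K'" using K1' by (cases K) auto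
            obtain k where k: "k \<in> {1..K}" "r ^ (k - 1) \<le> Nf \<omega>" "Nf \<omega> \<le> r ^ k"
              using slice_find[OF r1 N1, of K'] rK Nn K' by auto
            have rk: "r ^ k > 0" using r1 by simp
            have "c k \<le> \<delta> / Nf \<omega>" unfolding c_def using k(3) N d by (intro divide_left_mono) auto
            also have "\<delta> / Nf \<omega> < Dkl p \<mu>" using ev N by (simp add: divide_less_eq mult.commute)
            finally have pP: "p \<in> P k" unfolding P_def using ev p p_def by auto
            then have lk: "c k \<le> lam k * p - \<phi> (lam k)" using lam[of k] by blast
            have "W (lam k) n \<omega> = exp (Nf \<omega> * (lam k * p - \<phi> (lam k)))"
              unfolding W_eq p_def using N by (simp add: Nf_def Sf_def algebra_simps)
            moreover have "Nf \<omega> * (lam k * p - \<phi> (lam k)) \<ge> r ^ (k - 1) * c k"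
              using k(2) lk r1 d N unfolding c_def by (intro mult_mono) auto
            moreover have "r ^ (k - 1) * c k = \<delta> - 1"
            proof -
              have "r ^ k = r * r ^ (k - 1)" using k(1) by (cases k) auto
              then have "r ^ (k - 1) * c k = \<delta> / r" unfolding c_def using r1 by (simp add: field_simps)
              also have "\<dots> = \<delta> - 1" unfolding r_def using d1 by (simp add: field_simps)
              finally show ?thesis .
            qed
            ultimately have "exp (\<delta> - 1) \<le> W (lam k) n \<omega>" by simp
            then show "\<omega> \<in> (\<Union>k\<in>{1..K}. B k)" using k(1) \<omega> unfolding B_def by auto
          qed
          have "measure M E \<le> measure M (\<Union>k\<in>{1..K}. B k)"
            using sub_union Bsets by (intro finite_measure_mono) auto
          also have "\<dots> \<le> (\<Sum>k\<in>{1..K}. measure M (B k))"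
            using Bsets by (intro measure_UNION_le) auto
          also have "\<dots> \<le> (\<Sum>k\<in>{1..K}. exp (1 - \<delta>))" by (intro sum_mono Bmeas)
          also have "\<dots> = exp 1 * real_of_int \<lceil>\<delta> * ln (real n)\<rceil> * exp (- \<delta>)"
            using Kreal by (simp add: exp_diff exp_minus field_simps)
          finally show ?thesis .
        qed
      qed
    qed
  qed
qed

end

theorem theorem3:
  fixes M :: "'a measure" and X :: "nat \<Rightarrow> 'a \<Rightarrow> real" and F :: "nat \<Rightarrow> 'a measure"
    and \<epsilon> :: "nat \<Rightarrow> 'a \<Rightarrow> real" and \<mu> \<delta> :: real and n :: nat
  assumes "prob_space M"
    and indep: "prob_space.indep_vars M (\<lambda>_. borel) X {1..}"
    and range01: "\<And>t \<omega>. t \<ge> 1 \<Longrightarrow> \<omega> \<in> space M \<Longrightarrow> X t \<omega> \<in> {0..1}"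
    and mean: "\<And>t. t \<ge> 1 \<Longrightarrow> prob_space.expectation M (X t) = \<mu>"
    and sub: "\<And>t. subalgebra M (F t)"
    and incr: "\<And>s t. s \<le> t \<Longrightarrow> sets (F s) \<subseteq> sets (F t)"
    and adapted: "\<And>s t. 1 \<le> s \<Longrightarrow> s \<le> t \<Longrightarrow> X s \<in> borel_measurable (F t)"
    and future_indep: "\<And>s t. t < s \<Longrightarrow>
          prob_space.indep_set M (sets (F t)) {X s -` A \<inter> space M | A. A \<in> sets borel}"
    and eps01: "\<And>t \<omega>. t \<ge> 1 \<Longrightarrow> \<omega> \<in> space M \<Longrightarrow> \<epsilon> t \<omega> \<in> {0, 1}"
    and eps_pred: "\<And>t. t \<ge> 1 \<Longrightarrow> \<epsilon> t \<in> borel_measurable (F (t - 1))"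
    and "\<delta> > 0" and "n \<ge> 2"
  shows "measure M {\<omega> \<in> space M.
            kl_ucb \<delta> (\<Sum>s=1..n. \<epsilon> s \<omega>) (\<Sum>s=1..n. \<epsilon> s \<omega> * X s \<omega>) < \<mu>}
         \<le> exp 1 * real_of_int \<lceil>\<delta> * ln (real n)\<rceil> * exp (- \<delta>)"
proof -
  have "kls M X F \<epsilon> \<mu>"
    by (intro kls.intro kls_axioms.intro) (use assms in auto)
  then interpret kls M X F \<epsilon> \<mu> .
  show ?thesis by (rule main) (use assms in auto)
qed

end
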